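(* Let $\alpha\ge0$ and $\phi(x)=x(1-x)^{-\alpha}$, with Taylor coefficients $\phi_m=m(\alpha)_{m-1}$ at $0$. Then $\phi\in\mathcal S$ if and only if $\alpha\in[0,1]$.
   Context: $(a)_j=a(a+1)\cdots(a+j-1)$ denotes the Pochhammer symbol, with $(a)_0=1$. For $\phi(x)=\sum_{m\ge1}\phi_mx^m/m!$ with $\phi_m\ge0$, $\phi_1>0$ and radius of convergence $x_0\in(0,\infty]$ (here $x_0=1$), we write $\phi\in\mathcal S$ if $\phi$ is finite on the whole half-line $(-\infty,x_0)$ and $\phi'$ is absolutely monotone there, i.e. $\phi^{(n)}(x)\ge0$ for all $n\ge1$ and all $x<x_0$. *)

theory Defs
  imports "HOL-Analysis.Analysis"
begin

text \<open>A function phi with Taylor coefficients c (phi(x) = sum_{m>=1} c m x^m / m!),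
  c m >= 0, c 1 > 0, series converging to phi on |x| < x0, is in S if phi is finite
  (real valued and smooth) on the half-line (-inf, x0) and phi' is absolutely monotone there,
  i.e. the n-th derivative of phi is >= 0 for all n >= 1 and all x < x0.\<close>

definition abs_mono_deriv_on :: "(real \<Rightarrow> real) \<Rightarrow> real \<Rightarrow> bool" where
  "abs_mono_deriv_on f x0 \<longleftrightarrow>
     (\<forall>n. \<forall>x. x < x0 \<longrightarrow> ((deriv ^^ n) f has_real_derivative (deriv ^^ Suc n) f x) (at x)) \<and>
     (\<forall>n\<ge>1. \<forall>x. x < x0 \<longrightarrow> (deriv ^^ n) f x \<ge> 0)"

definition in_class_S :: "(nat \<Rightarrow> real) \<Rightarrow> real \<Rightarrow> (real \<Rightarrow> real) \<Rightarrow> bool" where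
  "in_class_S c x0 f \<longleftrightarrow>
     c 0 = 0 \<and> (\<forall>m. c m \<ge> 0) \<and> c 1 > 0 \<and>
     (\<forall>x. \<bar>x\<bar> < x0 \<longrightarrow> (\<lambda>m. c m * x ^ m / fact m) sums f x) \<and>
     abs_mono_deriv_on f x0"

end

theory Submission
  imports Defs
begin

definition gg :: "real \<Rightarrow> nat \<Rightarrow> real \<Rightarrow> real" where
  "gg a n x = pochhammer a n * (1 - x) powr (- a - real n)
             - pochhammer (a - 1) n * (1 - x) powr (1 - a - real n)"

lemma gg_deriv:
  assumes "x < 1"
  shows "(gg a n has_real_derivative gg a (Suc n) x) (at x)"
proof -
  have p: "((\<lambda>x. (1 - x) powr p) has_real_derivative (p * (1 - x) powr (p - 1) * (-1))) (at x)" for p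
    using assms by (auto intro!: derivative_eq_intros)
  have "(gg a n has_real_derivative
      pochhammer a n * ((- a - real n) * (1 - x) powr (- a - real n - 1) * (-1))
      - pochhammer (a - 1) n * ((1 - a - real n) * (1 - x) powr (1 - a - real n - 1) * (-1))) (at x)"
    unfolding gg_def by (intro DERIV_diff DERIV_cmult p)
  moreover have "pochhammer a n * ((- a - real n) * (1 - x) powr (- a - real n - 1) * (-1))
      - pochhammer (a - 1) n * ((1 - a - real n) * (1 - x) powr (1 - a - real n - 1) * (-1))
      = gg a (Suc n) x"
    unfolding gg_def pochhammer_rec' by (simp add: algebra_simps)
  ultimately show ?thesis by simp
qed

lemma gg_0:
  assumes "x < 1"
  shows "gg a 0 x = x * (1 - x) powr (- a)"
proof -
  have "(1 - x) powr (1 - a) = (1 - x) powr (1 + (- a))" by simp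
  also have "\<dots> = (1 - x) powr 1 * (1 - x) powr (- a)" by (rule powr_add)
  also have "\<dots> = (1 - x) * (1 - x) powr (- a)" using assms by simp
  finally have "(1 - x) powr (1 - a) = (1 - x) * (1 - x) powr (- a)" .
  then show ?thesis unfolding gg_def by (simp add: algebra_simps)
qed

lemma derivs_eq:
  shows "x < 1 \<Longrightarrow> (deriv ^^ n) (\<lambda>x. x * (1 - x) powr (- a)) x = gg a n x"
proof (induction n arbitrary: x)
  case 0
  then show ?case by (simp add: gg_0)
next
  case (Suc n)
  have "((deriv ^^ n) (\<lambda>x. x * (1 - x) powr (- a)) has_real_derivative gg a (Suc n) x) (at x)"
    by (rule has_field_derivative_transform_within_open[OF gg_deriv[OF Suc.prems], of "{..<1}"])
       (use Suc in auto)
  then show ?case by (simp add: DERIV_imp_deriv)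
qed

lemma series:
  assumes "\<bar>x\<bar> < (1::real)"
  shows "(\<lambda>m. real m * pochhammer a (m - 1) * x ^ m / fact m) sums (x * (1 - x) powr (- a))"
proof -
  have "(\<lambda>n. ((- a) gchoose n) * (- x)^n) sums (1 + - x) powr (- a)"
    using assms by (intro gen_binomial_real) simp
  moreover have "((- a) gchoose n) * (- x)^n = pochhammer a n * x ^ n / fact n" for n
    by (simp add: gbinomial_pochhammer power_mult_distrib[symmetric])
  ultimately have "(\<lambda>n. pochhammer a n * x ^ n / fact n) sums (1 - x) powr (- a)" by simp
  then have "(\<lambda>n. x * (pochhammer a n * x ^ n / fact n)) sums (x * (1 - x) powr (- a))"
    by (rule sums_mult)
  moreover have "(\<lambda>n. x * (pochhammer a n * x ^ n / fact n)) =
      (\<lambda>n. real (Suc n) * pochhammer a (Suc n - 1) * x ^ Suc n / fact (Suc n))"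
    by (rule ext) (simp add: fact_Suc field_simps del: of_nat_Suc)
  ultimately have "(\<lambda>n. (\<lambda>m. real m * pochhammer a (m - 1) * x ^ m / fact m) (Suc n))
     sums (x * (1 - x) powr (- a))" by simp
  from sums_Suc[OF this] show ?thesis by simp
qed

lemma poch_nonneg0:
  assumes "0 \<le> (a::real)"
  shows "pochhammer a n \<ge> 0"
  unfolding pochhammer_prod using assms by (intro prod_nonneg) auto

lemma poch_nonpos:
  assumes "0 \<le> a" "a \<le> 1" "n \<ge> 1"
  shows "pochhammer (a - 1) n \<le> (0::real)"
proof -
  obtain k where n: "n = Suc k" using assms(3) by (cases n) auto
  have "pochhammer (a - 1) (Suc k) = (a - 1) * pochhammer a k"
    by (simp add: pochhammer_rec)
  moreover have "pochhammer a k \<ge> 0" using assms by (simp add: poch_nonneg0)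
  ultimately show ?thesis using n assms by (simp add: mult_nonpos_nonneg)
qed

theorem proposition14:
  fixes \<alpha> :: real
  assumes "\<alpha> \<ge> 0"
  shows "in_class_S (\<lambda>m. real m * pochhammer \<alpha> (m - 1)) 1 (\<lambda>x. x * (1 - x) powr (- \<alpha>))
         \<longleftrightarrow> \<alpha> \<in> {0..1}"
proof
  assume S: "in_class_S (\<lambda>m. real m * pochhammer \<alpha> (m - 1)) 1 (\<lambda>x. x * (1 - x) powr (- \<alpha>))"
  show "\<alpha> \<in> {0..1}"
  proof (rule ccontr)
    assume "\<alpha> \<notin> {0..1}"
    with assms have a1: "\<alpha> > 1" by auto
    define x where "x = 1 - 2 * \<alpha> / (\<alpha> - 1)"
    have x1: "x < 1" using a1 by (simp add: x_def)
    have "(deriv ^^ 1) (\<lambda>x. x * (1 - x) powr (- \<alpha>)) x \<ge> 0"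
      using S x1 unfolding in_class_S_def abs_mono_deriv_on_def by blast
    then have "gg \<alpha> 1 x \<ge> 0" using derivs_eq[OF x1, of 1 \<alpha>] by simp
    moreover have "gg \<alpha> 1 x = (1 - x) powr (- \<alpha> - 1) * (\<alpha> - (\<alpha> - 1) * (1 - x))"
    proof -
      have "(1 - x) powr (1 - \<alpha> - 1) = (1 - x) powr (1 + (- \<alpha> - 1))" by simp
      also have "\<dots> = (1 - x) powr 1 * (1 - x) powr (- \<alpha> - 1)" by (rule powr_add)
      also have "\<dots> = (1 - x) * (1 - x) powr (- \<alpha> - 1)" using x1 by simp
      finally have e: "(1 - x) powr (1 - \<alpha> - 1) = (1 - x) * (1 - x) powr (- \<alpha> - 1)" .
      have "gg \<alpha> 1 x = \<alpha> * (1 - x) powr (- \<alpha> - 1) - (\<alpha> - 1) * (1 - x) powr (1 - \<alpha> - 1)"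
        unfolding gg_def by simp
      also have "\<dots> = (1 - x) powr (- \<alpha> - 1) * (\<alpha> - (\<alpha> - 1) * (1 - x))"
        unfolding e by (simp add: algebra_simps)
      finally show ?thesis .
    qed
    moreover have n: "\<alpha> - (\<alpha> - 1) * (1 - x) < 0" using a1 by (simp add: x_def)
    moreover have p: "(1 - x) powr (- \<alpha> - 1) > 0" using x1 by simp
    have "(1 - x) powr (- \<alpha> - 1) * (\<alpha> - (\<alpha> - 1) * (1 - x)) < 0"
      by (rule mult_pos_neg[OF p n])
    ultimately show False by linarith
  qed
next
  assume a: "\<alpha> \<in> {0..1}"
  have ders: "((deriv ^^ n) (\<lambda>x. x * (1 - x) powr (- \<alpha>)) has_real_derivative
       (deriv ^^ Suc n) (\<lambda>x. x * (1 - x) powr (- \<alpha>)) x) (at x)" if "x < 1" for n x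
  proof -
    have "(deriv ^^ Suc n) (\<lambda>x. x * (1 - x) powr (- \<alpha>)) x = gg \<alpha> (Suc n) x"
      by (rule derivs_eq[OF that])
    moreover have "((deriv ^^ n) (\<lambda>x. x * (1 - x) powr (- \<alpha>)) has_real_derivative gg \<alpha> (Suc n) x) (at x)"
      by (rule has_field_derivative_transform_within_open[OF gg_deriv[OF that], of "{..<1}"])
         (use derivs_eq that in auto)
    ultimately show ?thesis by simp
  qed
  have pos: "(deriv ^^ n) (\<lambda>x. x * (1 - x) powr (- \<alpha>)) x \<ge> 0" if "x < 1" "n \<ge> 1" for n x
  proof -
    have "pochhammer \<alpha> n * (1 - x) powr (- \<alpha> - real n) \<ge> 0"
      using assms by (simp add: poch_nonneg0)
    moreover have "pochhammer (\<alpha> - 1) n * (1 - x) powr (1 - \<alpha> - real n) \<le> 0"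
      using poch_nonpos[of \<alpha> n] a that by (simp add: mult_nonpos_nonneg)
    ultimately show ?thesis using derivs_eq[OF that(1)] unfolding gg_def by simp
  qed
  show "in_class_S (\<lambda>m. real m * pochhammer \<alpha> (m - 1)) 1 (\<lambda>x. x * (1 - x) powr (- \<alpha>))"
    unfolding in_class_S_def abs_mono_deriv_on_def
    using assms ders pos series by (auto simp: poch_nonneg0)
qed

end
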